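(* Let $T$ be a local, translation-invariant stochastic matrix on $\mathbb{Z}\times\{1,\dots,D\}$ with $\det X(k)\ne0$ for all $k\in[-\pi,\pi]$. Suppose there is a real orthogonal $D\times D$ matrix $M$ such that $$\sum_{b,c}M_{a,b}\,T_{j-l,b;j,c}\,M_{d,c}=T_{j+l,a;j,d}\quad\text{for all } l\in\mathbb{Z},\ j,\ a,\ d$$ (spatial inversion symmetry; equivalently $MX(-k)M^{\top}=X(k)$). Then $w(T,0)=0$.
   Context: States are pairs $(j,a)$, $j\in\mathbb{Z}$, $a\in\{1,\dots,D\}$. A stochastic matrix is a real matrix $T=(T_{i,a;j,b})$ with $T_{i,a;j,b}\ge0$ and $\sum_{i,a}T_{i,a;j,b}=1$ for all $(j,b)$. It is local if there are $C,\ell>0$ with $T_{i,a;j,b}\le Ce^{-|i-j|/\ell}$ for all sufficiently large $|i-j|$, and translation invariant if $T_{i+1,a;j+1,b}=T_{i,a;j,b}$. The Bloch matrix is $X(k)$ with $X_{a,b}(k)=\sum_{l\in\mathbb{Z}}T_{j+l,a;j,b}e^{-ikl}$, $k\in[-\pi,\pi]$, and $w(T,0)=\int_{-\pi}^{\pi}\frac{dk}{2\pi i}\partial_k\log\det X(k)\in\mathbb{Z}$. *)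

theory Defs
  imports "HOL-Analysis.Analysis"
begin

text \<open>States are pairs (j,a) with j an integer and a in a finite type 'd, so D = CARD('d).
  A matrix on Z x {1..D} is a function T i a j b = T_{i,a;j,b}.\<close>

definition stochastic :: "(int \<Rightarrow> 'd::finite \<Rightarrow> int \<Rightarrow> 'd \<Rightarrow> real) \<Rightarrow> bool" where
  "stochastic T \<longleftrightarrow> (\<forall>i a j b. 0 \<le> T i a j b) \<and>
     (\<forall>j b. ((\<lambda>(i, a). T i a j b) has_sum 1) UNIV)"

definition local_matrix :: "(int \<Rightarrow> 'd::finite \<Rightarrow> int \<Rightarrow> 'd \<Rightarrow> real) \<Rightarrow> bool" where
  "local_matrix T \<longleftrightarrow> (\<exists>C L N. C > 0 \<and> L > 0 \<and>
     (\<forall>i a j b. \<bar>i - j\<bar> \<ge> N \<longrightarrow> T i a j b \<le> C * exp (- real_of_int \<bar>i - j\<bar> / L)))"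

definition translation_invariant :: "(int \<Rightarrow> 'd::finite \<Rightarrow> int \<Rightarrow> 'd \<Rightarrow> real) \<Rightarrow> bool" where
  "translation_invariant T \<longleftrightarrow> (\<forall>i a j b. T (i + 1) a (j + 1) b = T i a j b)"

text \<open>Bloch matrix X(k)_{a,b} = sum over l of T_{j+l,a;j,b} e^{-ikl}; by translation
  invariance we take j = 0.\<close>
definition bloch :: "(int \<Rightarrow> 'd::finite \<Rightarrow> int \<Rightarrow> 'd \<Rightarrow> real) \<Rightarrow> real \<Rightarrow> complex ^ 'd ^ 'd" where
  "bloch T k = (\<chi> a b. \<Sum>\<^sub>\<infinity>l::int. complex_of_real (T l a 0 b) * exp (- \<i> * complex_of_real (k * real_of_int l)))"

text \<open>w(T,0) = (1/(2 pi i)) integral_{-pi}^{pi} d/dk log det X(k) dk, with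
  d/dk log det X(k) = (d/dk det X(k)) / det X(k).\<close>
definition wind :: "(int \<Rightarrow> 'd::finite \<Rightarrow> int \<Rightarrow> 'd \<Rightarrow> real) \<Rightarrow> complex" where
  "wind T = integral {-pi..pi}
      (\<lambda>k. vector_derivative (\<lambda>q. det (bloch T q)) (at k) / det (bloch T k)) / (2 * pi * \<i>)"

end

theory Submission
  imports Defs
begin

lemma differentiable_prod_fin:
  fixes f :: "'i \<Rightarrow> real \<Rightarrow> complex"
  assumes "finite I" "\<And>i. i \<in> I \<Longrightarrow> f i differentiable (at x)"
  shows "(\<lambda>q. \<Prod>i\<in>I. f i q) differentiable (at x)"
  using assms
proof (induction I rule: finite_induct)
  case empty then show ?case by simp
next
  case (insert i I)
  then show ?case by (simp add: differentiable_mult)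
qed

lemma infsum_finite_sum:
  fixes f :: "'i \<Rightarrow> 'a \<Rightarrow> complex"
  assumes "finite I" "\<And>i. i \<in> I \<Longrightarrow> f i summable_on A"
  shows "infsum (\<lambda>x. \<Sum>i\<in>I. f i x) A = (\<Sum>i\<in>I. infsum (f i) A) \<and> (\<lambda>x. \<Sum>i\<in>I. f i x) summable_on A"
  using assms
proof (induction I rule: finite_induct)
  case empty then show ?case by simp
next
  case (insert i I)
  then show ?case by (simp add: infsum_add summable_on_add)
qed

lemma summ_real:
  assumes "stochastic T"
  shows "(\<lambda>l. T l a 0 b) summable_on UNIV"
proof -
  have "(\<lambda>(i, a). T i a 0 b) summable_on UNIV"
    using assms unfolding stochastic_def by (meson has_sum_imp_summable)
  then have "(\<lambda>(i, a). T i a 0 b) summable_on ((\<lambda>i. (i, a)) ` UNIV)"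
    by (rule summable_on_subset_banach) auto
  then have "((\<lambda>(i, a). T i a 0 b) \<circ> (\<lambda>i. (i, a))) summable_on UNIV"
    by (subst (asm) summable_on_reindex) (auto simp: inj_on_def)
  then show ?thesis by (simp add: o_def)
qed

lemma summ_cplx:
  assumes "stochastic T"
  shows "(\<lambda>l. complex_of_real (T l a 0 b) * exp (- \<i> * complex_of_real (k * real_of_int l))) summable_on UNIV"
proof -
  have "(\<lambda>l. complex_of_real (T l a 0 b)) summable_on UNIV"
    using summable_on_of_real[OF summ_real[OF assms, of a b], where ?'a=complex] by simp
  then have "(\<lambda>l. norm (complex_of_real (T l a 0 b))) summable_on UNIV"
    by (rule summable_on_iff_abs_summable_on_complex[THEN iffD1])
  then have "(\<lambda>l. norm (complex_of_real (T l a 0 b) * exp (- \<i> * complex_of_real (k * real_of_int l)))) summable_on UNIV"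
  proof (rule Infinite_Sum.abs_summable_on_comparison_test)
    fix l :: int
    have "norm (exp (- \<i> * complex_of_real (k * real_of_int l))) = 1"
      by (simp add: norm_exp_eq_Re)
    then show "norm (complex_of_real (T l a 0 b) * exp (- \<i> * complex_of_real (k * real_of_int l))) \<le> norm (complex_of_real (T l a 0 b))"
      by (simp add: norm_mult)
  qed
  then show ?thesis by (rule summable_on_iff_abs_summable_on_complex[THEN iffD2])
qed

lemma reflect_sum:
  assumes "stochastic T"
  shows "(\<lambda>l. complex_of_real (T (-l) b 0 c) * exp (- \<i> * complex_of_real (k * real_of_int l))) summable_on UNIV
     \<and> (\<Sum>\<^sub>\<infinity>l. complex_of_real (T (-l) b 0 c) * exp (- \<i> * complex_of_real (k * real_of_int l))) = bloch T (-k) $ b $ c"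
proof -
  define g where "g = (\<lambda>l. complex_of_real (T l b 0 c) * exp (- \<i> * complex_of_real (-k * real_of_int l)))"
  have gs: "g summable_on UNIV" unfolding g_def by (rule summ_cplx[OF assms])
  have eq: "(g \<circ> uminus) = (\<lambda>l. complex_of_real (T (-l) b 0 c) * exp (- \<i> * complex_of_real (k * real_of_int l)))"
    by (auto simp: g_def o_def)
  have inj: "inj_on (uminus :: int \<Rightarrow> int) UNIV" by (simp add: inj_on_def)
  have im: "uminus ` (UNIV :: int set) = UNIV" by (simp add: surj_def)
  have "(g \<circ> uminus) summable_on UNIV"
    using summable_on_reindex[OF inj, of g] gs im by simp
  moreover have "infsum (g \<circ> uminus) UNIV = infsum g UNIV"
    using infsum_reindex[OF inj, of g] im by simp
  moreover have "infsum g UNIV = bloch T (-k) $ b $ c" unfolding g_def bloch_def by simp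
  ultimately show ?thesis unfolding eq by simp
qed

lemma bloch_sym:
  fixes T :: "int \<Rightarrow> 'd::finite \<Rightarrow> int \<Rightarrow> 'd \<Rightarrow> real"
    and M :: "real ^ 'd ^ 'd"
  assumes st: "stochastic T"
    and sy: "\<forall>l j a d. (\<Sum>b\<in>UNIV. \<Sum>c\<in>UNIV. M $ a $ b * T (j - l) b j c * M $ d $ c) = T (j + l) a j d"
  shows "bloch T k = (\<chi> i j. complex_of_real (M $ i $ j)) ** bloch T (-k) ** transpose (\<chi> i j. complex_of_real (M $ i $ j))"
proof -
  define E where "E l = exp (- \<i> * complex_of_real (k * real_of_int l))" for l :: int
  define h where "h b c l = complex_of_real (T (-l) b 0 c) * E l" for b c l
  have hfun: "h b c = (\<lambda>l. complex_of_real (T (-l) b 0 c) * exp (- \<i> * complex_of_real (k * real_of_int l)))" for b c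
    by (simp add: fun_eq_iff h_def E_def)
  have hs: "h b c summable_on UNIV" for b c
    unfolding hfun by (rule conjunct1[OF reflect_sum[OF st]])
  have hv: "infsum (h b c) UNIV = bloch T (-k) $ b $ c" for b c
    unfolding hfun by (rule conjunct2[OF reflect_sum[OF st]])
  have "bloch T k $ a $ d = ((\<chi> i j. complex_of_real (M $ i $ j)) ** bloch T (-k) ** transpose (\<chi> i j. complex_of_real (M $ i $ j))) $ a $ d" for a d
  proof -
    have T1: "T l a 0 d = (\<Sum>b\<in>UNIV. \<Sum>c\<in>UNIV. M $ a $ b * T (-l) b 0 c * M $ d $ c)" for l
      using spec[OF spec[OF spec[OF spec[OF sy, of l], of 0], of a], of d] by simp
    have "bloch T k $ a $ d = (\<Sum>\<^sub>\<infinity>l. complex_of_real (T l a 0 d) * E l)"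
      by (simp add: bloch_def E_def)
    also have "\<dots> = (\<Sum>\<^sub>\<infinity>l. \<Sum>b\<in>UNIV. \<Sum>c\<in>UNIV. complex_of_real (M $ a $ b * M $ d $ c) * h b c l)"
      by (rule infsum_cong) (simp add: T1 h_def sum_distrib_right sum_distrib_left mult_ac)
    also have "\<dots> = (\<Sum>b\<in>UNIV. \<Sum>\<^sub>\<infinity>l. \<Sum>c\<in>UNIV. complex_of_real (M $ a $ b * M $ d $ c) * h b c l)"
    proof (rule conjunct1[OF infsum_finite_sum])
      fix b
      show "(\<lambda>l. \<Sum>c\<in>UNIV. complex_of_real (M $ a $ b * M $ d $ c) * h b c l) summable_on UNIV"
        by (rule conjunct2[OF infsum_finite_sum]) (auto intro: summable_on_cmult_right hs)
    qed simp
    also have "\<dots> = (\<Sum>b\<in>UNIV. \<Sum>c\<in>UNIV. \<Sum>\<^sub>\<infinity>l. complex_of_real (M $ a $ b * M $ d $ c) * h b c l)"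
      by (rule sum.cong[OF refl], rule conjunct1[OF infsum_finite_sum]) (auto intro: summable_on_cmult_right hs)
    also have "\<dots> = (\<Sum>b\<in>UNIV. \<Sum>c\<in>UNIV. complex_of_real (M $ a $ b * M $ d $ c) * bloch T (-k) $ b $ c)"
      by (simp add: infsum_cmult_right' hv)
    also have "\<dots> = ((\<chi> i j. complex_of_real (M $ i $ j)) ** bloch T (-k) ** transpose (\<chi> i j. complex_of_real (M $ i $ j))) $ a $ d"
      by (simp add: matrix_matrix_mult_def transpose_def sum_distrib_left mult_ac)
         (rule sum.swap)
    finally show ?thesis .
  qed
  then show ?thesis by (simp add: vec_eq_iff)
qed

lemma ps_summ:
  fixes s :: "nat \<Rightarrow> real"
  assumes L: "L > 0" and nn: "\<And>n. 0 \<le> s n" and bd: "\<And>n. n \<ge> Nz \<Longrightarrow> s n \<le> C * exp (- real n / L)"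
  shows "summable (\<lambda>n. complex_of_real (s n) * complex_of_real (exp (1/(2*L))) ^ n)"
proof (rule summable_comparison_test')
  have "norm (exp (-1/(2*L))) < 1" using L by simp
  then show "summable (\<lambda>n. C * exp (-1/(2*L)) ^ n)"
    by (intro summable_mult summable_geometric)
next
  fix n assume n: "n \<ge> Nz"
  have "norm (complex_of_real (s n) * complex_of_real (exp (1/(2*L))) ^ n) = s n * exp (1/(2*L)) ^ n"
    by (simp add: norm_mult norm_power abs_of_nonneg nn)
  also have "\<dots> \<le> C * exp (- real n / L) * exp (1/(2*L)) ^ n"
    by (intro mult_right_mono bd n) simp
  also have "\<dots> = C * exp (-1/(2*L)) ^ n"
  proof -
    have e1: "exp (1/(2*L)) ^ n = exp (real n * (1/(2*L)))" by (simp only: exp_of_nat_mult)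
    have e2: "exp (-1/(2*L)) ^ n = exp (real n * (-1/(2*L)))" by (simp only: exp_of_nat_mult)
    have "- real n / L + real n * (1/(2*L)) = real n * (-1/(2*L))" using L by (simp add: field_simps)
    then show ?thesis unfolding e1 e2 by (simp add: mult.assoc exp_add[symmetric])
  qed
  finally show "norm (complex_of_real (s n) * complex_of_real (exp (1/(2*L))) ^ n) \<le> C * exp (-1/(2*L)) ^ n" .
qed

lemma ps_fd:
  fixes c :: "nat \<Rightarrow> complex"
  assumes "summable (\<lambda>n. c n * K ^ n)" "norm z < norm K"
  shows "(\<lambda>x. \<Sum>n. c n * x ^ n) field_differentiable (at z)"
  using termdiffs_strong[OF assms] unfolding field_differentiable_def by blast

lemma suminf_infsum:
  fixes g :: "nat \<Rightarrow> complex"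
  assumes "g summable_on UNIV"
  shows "suminf g = infsum g UNIV"
  using has_sum_imp_sums[OF has_sum_infsum[OF assms]] by (simp add: sums_iff)

lemma int_split: "(UNIV :: int set) = range int \<union> range (\<lambda>n. - int (Suc n))"
proof -
  have "x \<in> range int \<union> range (\<lambda>n. - int (Suc n))" for x :: int
  proof (cases "x \<ge> 0")
    case True
    then have "x = int (nat x)" by simp
    then show ?thesis by blast
  next
    case False
    then have "x = - int (Suc (nat (- x - 1)))" by simp
    then show ?thesis by blast
  qed
  then show ?thesis by blast
qed

lemma bloch_rep:
  fixes T :: "int \<Rightarrow> 'd::finite \<Rightarrow> int \<Rightarrow> 'd \<Rightarrow> real"
  assumes st: "stochastic T"
  shows "bloch T q $ a $ b = (\<Sum>n. complex_of_real (T (int n) a 0 b) * exp (-\<i> * of_real q) ^ n)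
     + exp (\<i> * of_real q) * (\<Sum>n. complex_of_real (T (- int (Suc n)) a 0 b) * exp (\<i> * of_real q) ^ n)"
proof -
  define f where "f = (\<lambda>l. complex_of_real (T l a 0 b) * exp (- \<i> * complex_of_real (q * real_of_int l)))"
  define z1 where "z1 = exp (-\<i> * of_real q)"
  define z2 where "z2 = exp (\<i> * of_real q)"
  define ng where "ng = (\<lambda>n::nat. - int (Suc n))"
  have fs: "f summable_on UNIV" unfolding f_def by (rule summ_cplx[OF st])
  have disj: "range int \<inter> range ng = {}" by (auto simp: ng_def)
  have injint: "inj_on int UNIV" by simp
  have injng: "inj_on ng UNIV" by (simp add: inj_on_def ng_def)
  have s1: "f summable_on range int" by (rule summable_on_subset_banach[OF fs]) simp
  have s2: "f summable_on range ng" by (rule summable_on_subset_banach[OF fs]) simp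
  have "infsum f UNIV = infsum f (range int) + infsum f (range ng)"
    using int_split infsum_Un_disjoint[OF s1 s2 disj] by (simp add: ng_def)
  also have "\<dots> = infsum (f \<circ> int) UNIV + infsum (f \<circ> ng) UNIV"
    by (simp add: infsum_reindex[OF injint] infsum_reindex[OF injng])
  finally have split: "infsum f UNIV = infsum (f \<circ> int) UNIV + infsum (f \<circ> ng) UNIV" .
  have fi: "(f \<circ> int) = (\<lambda>n. complex_of_real (T (int n) a 0 b) * z1 ^ n)"
  proof
    fix n
    have "exp (- \<i> * complex_of_real (q * real_of_int (int n))) = exp (of_nat n * (-\<i> * of_real q))"
      by (simp add: mult_ac)
    moreover have "z1 ^ n = exp (of_nat n * (-\<i> * of_real q))"
      unfolding z1_def by (rule exp_of_nat_mult[symmetric])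
    ultimately show "(f \<circ> int) n = complex_of_real (T (int n) a 0 b) * z1 ^ n"
      by (simp only: f_def o_def)
  qed
  have fn: "(f \<circ> ng) = (\<lambda>n. z2 * (complex_of_real (T (- int (Suc n)) a 0 b) * z2 ^ n))"
  proof
    fix n
    have "exp (- \<i> * complex_of_real (q * real_of_int (- int (Suc n)))) = exp (of_nat (Suc n) * (\<i> * of_real q))"
      by (simp only: of_int_minus of_int_of_nat_eq of_real_mult of_real_minus of_real_of_nat_eq) (simp add: algebra_simps)
    moreover have "z2 * z2 ^ n = exp (of_nat (Suc n) * (\<i> * of_real q))"
      unfolding z2_def exp_of_nat_mult by simp
    ultimately show "(f \<circ> ng) n = z2 * (complex_of_real (T (- int (Suc n)) a 0 b) * z2 ^ n)"
      by (simp only: f_def o_def ng_def mult.left_commute[of z2])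
  qed
  have si: "(f \<circ> int) summable_on UNIV" using s1 summable_on_reindex[OF injint, of f] by simp
  have sn: "(f \<circ> ng) summable_on UNIV" using s2 summable_on_reindex[OF injng, of f] by simp
  have e1: "infsum (f \<circ> int) UNIV = (\<Sum>n. complex_of_real (T (int n) a 0 b) * z1 ^ n)"
    using suminf_infsum[OF si] fi by simp
  have sm: "summable (f \<circ> ng)" using has_sum_imp_sums[OF has_sum_infsum[OF sn]] sums_summable by blast
  have z2nz: "z2 \<noteq> 0" by (simp add: z2_def)
  have sm2: "summable (\<lambda>n. complex_of_real (T (- int (Suc n)) a 0 b) * z2 ^ n)"
    using sm z2nz unfolding fn by simp
  have e2: "infsum (f \<circ> ng) UNIV = z2 * (\<Sum>n. complex_of_real (T (- int (Suc n)) a 0 b) * z2 ^ n)"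
    using suminf_infsum[OF sn] suminf_mult[OF sm2, of z2] fn by simp
  have "bloch T q $ a $ b = infsum f UNIV" by (simp add: bloch_def f_def)
  then show ?thesis using split e1 e2 by (simp add: z1_def z2_def)
qed

lemma entry_diff:
  fixes T :: "int \<Rightarrow> 'd::finite \<Rightarrow> int \<Rightarrow> 'd \<Rightarrow> real"
  assumes st: "stochastic T" and lc: "local_matrix T"
  shows "(\<lambda>q. bloch T q $ a $ b) differentiable (at k)"
proof -
  obtain C L N where C: "C > 0" and L: "L > 0"
    and bd: "\<forall>i a j b. \<bar>i - j\<bar> \<ge> N \<longrightarrow> T i a j b \<le> C * exp (- real_of_int \<bar>i - j\<bar> / L)"
    using lc unfolding local_matrix_def by blast
  have nn: "0 \<le> T i a' j b'" for i a' j b' using st unfolding stochastic_def by blast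
  define K where "K = complex_of_real (exp (1/(2*L)))"
  define P where "P = (\<lambda>z. \<Sum>n. complex_of_real (T (int n) a 0 b) * z ^ n)"
  define Q where "Q = (\<lambda>z. \<Sum>n. complex_of_real (T (- int (Suc n)) a 0 b) * z ^ n)"
  have sc: "summable (\<lambda>n. complex_of_real (T (int n) a 0 b) * K ^ n)"
    unfolding K_def
  proof (rule ps_summ[OF L, where Nz = "nat N" and C = C])
    fix n :: nat assume "nat N \<le> n"
    then have "N \<le> \<bar>int n - 0\<bar>" by (simp add: nat_le_iff)
    then have "T (int n) a 0 b \<le> C * exp (- real_of_int \<bar>int n - 0\<bar> / L)" using bd by blast
    then show "T (int n) a 0 b \<le> C * exp (- real n / L)" by simp
  qed (rule nn)
  have sd: "summable (\<lambda>n. complex_of_real (T (- int (Suc n)) a 0 b) * K ^ n)"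
    unfolding K_def
  proof (rule ps_summ[OF L, where Nz = "nat N" and C = C])
    fix n :: nat assume "nat N \<le> n"
    then have "N \<le> \<bar>- int (Suc n) - 0\<bar>" by (simp add: nat_le_iff)
    then have "T (- int (Suc n)) a 0 b \<le> C * exp (- real_of_int \<bar>- int (Suc n) - 0\<bar> / L)" using bd by blast
    also have "\<dots> \<le> C * exp (- real n / L)"
      using C L by (simp add: divide_right_mono field_simps)
    finally show "T (- int (Suc n)) a 0 b \<le> C * exp (- real n / L)" .
  qed (rule nn)
  have nK: "1 < norm K" using L by (simp add: K_def)
  have fe: "(\<lambda>z. exp (c0 * z)) field_differentiable at w" for c0 w :: complex
  proof -
    have "(\<lambda>z. c0 * z) field_differentiable at w" by (intro derivative_intros)
    then have "(exp \<circ> (\<lambda>z. c0 * z)) field_differentiable at w"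
      by (rule field_differentiable_compose) (rule field_differentiable_within_exp)
    then show ?thesis by (simp add: o_def)
  qed
  have fP: "(\<lambda>z. P (exp (c0 * z))) field_differentiable at w" if "norm (exp (c0 * w)) = 1" for c0 w
  proof -
    have "P field_differentiable at (exp (c0 * w))"
      unfolding P_def by (rule ps_fd[OF sc]) (use that nK in simp)
    then have "(P \<circ> (\<lambda>z. exp (c0 * z))) field_differentiable at w"
      by (rule field_differentiable_compose[OF fe])
    then show ?thesis by (simp add: o_def)
  qed
  have fQ: "(\<lambda>z. Q (exp (c0 * z))) field_differentiable at w" if "norm (exp (c0 * w)) = 1" for c0 w
  proof -
    have "Q field_differentiable at (exp (c0 * w))"
      unfolding Q_def by (rule ps_fd[OF sd]) (use that nK in simp)
    then have "(Q \<circ> (\<lambda>z. exp (c0 * z))) field_differentiable at w"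
      by (rule field_differentiable_compose[OF fe])
    then show ?thesis by (simp add: o_def)
  qed
  define H where "H = (\<lambda>z. P (exp (-\<i> * z)) + exp (\<i> * z) * Q (exp (\<i> * z)))"
  have n1: "norm (exp (-\<i> * complex_of_real k)) = 1" by (simp add: norm_exp_eq_Re)
  have n2: "norm (exp (\<i> * complex_of_real k)) = 1" by (simp add: norm_exp_eq_Re)
  have "H field_differentiable at (complex_of_real k)"
    unfolding H_def
    by (intro field_differentiable_add field_differentiable_mult fe fP fQ n1 n2)
  then have Hd: "H differentiable at (complex_of_real k)"
    by (rule field_differentiable_imp_differentiable)
  have od: "complex_of_real differentiable at k"
    by (rule bounded_linear_imp_differentiable[OF bounded_linear_of_real])
  have "(H \<circ> complex_of_real) differentiable at k"
    by (rule differentiable_chain_at[OF od Hd])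
  moreover have "(H \<circ> complex_of_real) = (\<lambda>q. bloch T q $ a $ b)"
    by (rule ext) (simp add: bloch_rep[OF st] H_def P_def Q_def)
  ultimately show ?thesis by simp
qed

lemma det_diff:
  fixes T :: "int \<Rightarrow> 'd::finite \<Rightarrow> int \<Rightarrow> 'd \<Rightarrow> real"
  assumes st: "stochastic T" and lc: "local_matrix T"
  shows "(\<lambda>q. det (bloch T q)) differentiable (at k)"
  unfolding det_def
  by (intro differentiable_sum differentiable_mult differentiable_const differentiable_prod_fin
      entry_diff[OF st lc] ballI) auto

lemma det_sym:
  fixes T :: "int \<Rightarrow> 'd::finite \<Rightarrow> int \<Rightarrow> 'd \<Rightarrow> real"
    and M :: "real ^ 'd ^ 'd"
  assumes st: "stochastic T" and om: "orthogonal_matrix M"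
    and sy: "\<forall>l j a d. (\<Sum>b\<in>UNIV. \<Sum>c\<in>UNIV. M $ a $ b * T (j - l) b j c * M $ d $ c) = T (j + l) a j d"
  shows "det (bloch T k) = det (bloch T (-k))"
proof -
  define Mc :: "complex ^ 'd ^ 'd" where "Mc = (\<chi> i j. complex_of_real (M $ i $ j))"
  have dM: "det Mc = complex_of_real (det M)"
    unfolding det_def Mc_def by (simp add: of_real_sum of_real_prod)
  have "det M * det M = 1" using det_orthogonal_matrix[OF om] by auto
  then have dd: "det Mc * det Mc = 1" unfolding dM by (metis of_real_1 of_real_mult)
  have "det (bloch T k) = det Mc * det (bloch T (-k)) * det Mc"
    using bloch_sym[OF st sy, of k] by (simp add: Mc_def det_mul det_transpose)
  also have "\<dots> = det (bloch T (-k))" using dd by (simp add: mult_ac)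
  finally show ?thesis .
qed

theorem mainTheorem7:
  fixes T :: "int \<Rightarrow> 'd::finite \<Rightarrow> int \<Rightarrow> 'd \<Rightarrow> real"
    and M :: "real ^ 'd ^ 'd"
  assumes "stochastic T" and "local_matrix T" and "translation_invariant T"
    and "\<forall>k \<in> {-pi..pi}. det (bloch T k) \<noteq> 0"
    and "orthogonal_matrix M"
    and "\<forall>l j a d. (\<Sum>b\<in>UNIV. \<Sum>c\<in>UNIV. M $ a $ b * T (j - l) b j c * M $ d $ c) = T (j + l) a j d"
  shows "wind T = 0"
proof -
  define F where "F = (\<lambda>q. det (bloch T q))"
  have Fs: "F (-q) = F q" for q
    unfolding F_def using det_sym[OF assms(1) assms(5) assms(6), of q] by simp
  have Fsym: "F \<circ> uminus = F" by (rule ext) (simp add: Fs)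
  have VD: "vector_derivative F (at (-k)) = - vector_derivative F (at k)" for k
  proof -
    have h: "(F has_vector_derivative vector_derivative F (at k)) (at k)"
      unfolding F_def by (rule vector_derivative_works[THEN iffD1], rule det_diff[OF assms(1) assms(2)])
    have u: "(uminus has_vector_derivative (-1)) (at (-k :: real))"
      by (auto intro!: derivative_eq_intros simp: has_vector_derivative_def)
    have "((F \<circ> uminus) has_vector_derivative ((-1) *\<^sub>R vector_derivative F (at k))) (at (-k))"
      by (rule vector_diff_chain_at[OF u]) (simp add: h)
    then have "(F has_vector_derivative (- vector_derivative F (at k))) (at (-k))"
      by (simp add: Fsym)
    then show ?thesis by (rule vector_derivative_at)
  qed
  define g where "g = (\<lambda>k. vector_derivative F (at k) / F k)"
  have godd: "g (-k) = - g k" for k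
    by (simp add: g_def VD Fs)
  have "integral {-pi..pi} g = integral {-pi..pi} (\<lambda>x. g (- x))"
    using Henstock_Kurzweil_Integration.integral_reflect_real[of pi "-pi" g] by simp
  also have "\<dots> = - integral {-pi..pi} g" by (simp add: godd)
  finally have "integral {-pi..pi} g = 0" by simp
  moreover have "wind T = integral {-pi..pi} g / (2 * pi * \<i>)"
    unfolding wind_def g_def F_def by simp
  ultimately show ?thesis by simp
qed

end
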